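(* Let $K_n$, $L_n$, $C_n$, $K_{1,n-1}$ denote the complete graph, path, cycle and star on $n$ vertices ($L_0$ and $K_0$ are the empty graph, $K_{1,0}=K_1$); their graph-associahedra are the permutohedron $Pe^{n-1}$, associahedron $As^{n-1}$, cyclohedron $Cy^{n-1}$ and stellohedron $St^{n-1}$, with $F(Pe^{n-1})=F_{K_n}$, $F(As^{n-1})=F_{L_n}$, $F(Cy^{n-1})=F_{C_n}$, $F(St^{n-1})=F_{K_{1,n-1}}$. Then $$F_{K_n}=n\,(F_{K_{n-1}})_1\ (n\ge1),\qquad F_{L_n}=\Big(\sum_{k=1}^nF_{L_{k-1}}F_{L_{n-k}}\Big)_1\ (n\ge1),$$ $$F_{C_n}=n\,(F_{L_{n-1}})_1\ (n\ge3),\qquad F_{K_{1,n-1}}=\big((n-1)F_{K_{1,n-2}}+M_{(1)}^{\,n-1}\big)_1\ (n\ge2).$$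
   Context: For a coloring $\lambda:V\to\mathbb{N}=\{1,2,\dots\}$ of a finite simple graph $\Gamma$ with values $i_1<\dots<i_k$, let $I_j=\lambda^{-1}(\{i_1,\dots,i_j\})$, $I_0=\emptyset$. It is ordered if for each $j$, no two distinct vertices $u,w$ with $\lambda(u)=\lambda(w)=i_j$ are joined by a path in $\Gamma$ (possibly a single edge) all of whose internal vertices lie in $I_{j-1}$. $F_\Gamma=\sum_{\lambda\text{ ordered}}\prod_{v\in V}x_{\lambda(v)}$, with $F_\Gamma=1$ for the graph with no vertices. For a composition $\alpha=(a_1,\dots,a_k)$, $M_\alpha=\sum_{i_1<\dots<i_k}x_{i_1}^{a_1}\cdots x_{i_k}^{a_k}$, $M_{()}=1$; $M_{(1)}=\sum_i x_i$. The shifting operator $G\mapsto(G)_1$ is the linear map on quasisymmetric functions with $(M_{(a_1,\dots,a_k)})_1=M_{(a_1,\dots,a_k,1)}$. *)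

theory Defs
  imports Main
begin

(* Monomials in x_1, x_2, ... are exponent vectors  m :: nat => nat  (m i = exponent of x_i;
   index 0 is unused, colours/variables start at 1).  A formal power series (quasisymmetric
   function) is its coefficient function  (nat => nat) => int. *)

type_synonym mono = "nat \<Rightarrow> nat"
type_synonym qsf = "mono \<Rightarrow> int"

(* a finite simple graph on vertices V with symmetric irreflexive adjacency E *)
type_synonym graph = "nat set \<times> (nat \<Rightarrow> nat \<Rightarrow> bool)"

definition joined_in :: "graph \<Rightarrow> nat set \<Rightarrow> nat \<Rightarrow> nat \<Rightarrow> bool" where
  "joined_in G S u w \<longleftrightarrow>
     (\<exists>ps. set ps \<subseteq> S \<inter> fst G \<and> distinct (u # ps @ [w]) \<and> successively (snd G) (u # ps @ [w]))"

(* ordered colouring lam : V -> {1,2,...}; for a colour c = i_j, I_{j-1} = {v. lam v < c} *)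
definition ordered_col :: "graph \<Rightarrow> (nat \<Rightarrow> nat) \<Rightarrow> bool" where
  "ordered_col G lam \<longleftrightarrow>
     (\<forall>v\<in>fst G. 1 \<le> lam v) \<and>
     (\<forall>u\<in>fst G. \<forall>w\<in>fst G. u \<noteq> w \<and> lam u = lam w \<longrightarrow>
        \<not> joined_in G {v\<in>fst G. lam v < lam u} u w)"

definition qsF :: "graph \<Rightarrow> qsf" where
  "qsF G m = int (card {lam. (\<forall>v. v \<notin> fst G \<longrightarrow> lam v = 0) \<and> ordered_col G lam \<and>
                               (\<forall>i. m i = card {v\<in>fst G. lam v = i})})"

definition comp_of :: "mono \<Rightarrow> nat list" where
  "comp_of m = map m (sorted_list_of_set {i. m i \<noteq> 0})"

definition is_monomial :: "mono \<Rightarrow> bool" where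
  "is_monomial m \<longleftrightarrow> m 0 = 0 \<and> finite {i. m i \<noteq> 0}"

definition mono_of :: "nat list \<Rightarrow> mono" where
  "mono_of as = (\<lambda>i. if 1 \<le> i \<and> i \<le> length as then as ! (i - 1) else 0)"

definition qM :: "nat list \<Rightarrow> qsf" where
  "qM as m = (if is_monomial m \<and> comp_of m = as then 1 else 0)"

(* shifting operator: the linear map with (M_(a_1..a_k))_1 = M_(a_1..a_k,1); for a
   quasisymmetric G = sum_alpha G(x_1^{a_1}..x_k^{a_k}) M_alpha this is
   (G)_1 = sum_alpha G(mono_of alpha) M_(alpha@[1]), whose coefficients are: *)
definition shift1 :: "qsf \<Rightarrow> qsf" where
  "shift1 G m = (if is_monomial m \<and> comp_of m \<noteq> [] \<and> last (comp_of m) = 1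
                 then G (mono_of (butlast (comp_of m))) else 0)"

definition qmul :: "qsf \<Rightarrow> qsf \<Rightarrow> qsf" where
  "qmul f g m = (\<Sum>a\<in>{a. \<forall>i. a i \<le> m i}. f a * g (\<lambda>i. m i - a i))"

definition qone :: qsf where
  "qone m = (if m = (\<lambda>_. 0) then 1 else 0)"

definition qpow :: "qsf \<Rightarrow> nat \<Rightarrow> qsf" where
  "qpow f k = (qmul f ^^ k) qone"

definition complete_graph :: "nat \<Rightarrow> graph" where
  "complete_graph n = ({0..<n}, \<lambda>u v. u \<noteq> v)"

definition path_graph :: "nat \<Rightarrow> graph" where
  "path_graph n = ({0..<n}, \<lambda>u v. u + 1 = v \<or> v + 1 = u)"

definition cycle_graph :: "nat \<Rightarrow> graph" where
  "cycle_graph n = ({0..<n}, \<lambda>u v. u \<noteq> v \<and>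
      (u + 1 = v \<or> v + 1 = u \<or> (u = 0 \<and> v = n - 1) \<or> (v = 0 \<and> u = n - 1)))"

definition star_graph :: "nat \<Rightarrow> graph" where
  "star_graph n = ({0..<n}, \<lambda>u v. u \<noteq> v \<and> (u = 0 \<or> v = 0))"

end

theory Submission
  imports Defs
begin


definition OC :: "graph \<Rightarrow> mono \<Rightarrow> (nat \<Rightarrow> nat) set" where
  "OC G m = {lam. (\<forall>v. v \<notin> fst G \<longrightarrow> lam v = 0) \<and> ordered_col G lam \<and>
                               (\<forall>i. m i = card {v\<in>fst G. lam v = i})}"

lemma qsF_OC: "qsF G m = int (card (OC G m))"
  by (simp add: qsF_def OC_def)

lemma OC_memI:
  assumes "\<And>v. v \<notin> V \<Longrightarrow> lam v = 0" "\<And>v. v \<in> V \<Longrightarrow> 1 \<le> lam v"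
    "\<And>u w. u \<in> V \<Longrightarrow> w \<in> V \<Longrightarrow> u \<noteq> w \<Longrightarrow> lam u = lam w \<Longrightarrow>
        joined_in (V,E) {v\<in>V. lam v < lam u} u w \<Longrightarrow> False"
    "\<And>i. m i = card {v\<in>V. lam v = i}"
  shows "lam \<in> OC (V,E) m"
  using assms unfolding OC_def ordered_col_def by auto

lemma OC_D:
  assumes "lam \<in> OC (V,E) m"
  shows "\<And>v. v \<notin> V \<Longrightarrow> lam v = 0" "\<And>v. v \<in> V \<Longrightarrow> 1 \<le> lam v"
    "\<And>u w. u \<in> V \<Longrightarrow> w \<in> V \<Longrightarrow> u \<noteq> w \<Longrightarrow> lam u = lam w \<Longrightarrow>
        \<not> joined_in (V,E) {v\<in>V. lam v < lam u} u w"
    "\<And>i. m i = card {v\<in>V. lam v = i}"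
  using assms unfolding OC_def ordered_col_def by auto

lemma OC_val:
  assumes "finite V" "lam \<in> OC (V,E) m" "v \<in> V"
  shows "m (lam v) \<noteq> 0"
proof -
  have "v \<in> {x\<in>V. lam x = lam v}" using assms by auto
  hence "card {x\<in>V. lam x = lam v} \<noteq> 0" using assms(1) by (auto simp: card_eq_0_iff)
  thus ?thesis using OC_D(4)[OF assms(2)] by metis
qed

lemma OC_supp:
  assumes "lam \<in> OC (V,E) m" "m i \<noteq> 0"
  shows "i \<in> lam ` V"
proof -
  have "card {v\<in>V. lam v = i} \<noteq> 0" using OC_D(4)[OF assms(1)] assms(2) by metis
  hence "{v\<in>V. lam v = i} \<noteq> {}" by (metis card.empty)
  thus ?thesis by auto
qed

lemma OC_finite:
  assumes "finite V"
  shows "finite (OC (V,E) m)"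
proof (cases "finite {i. m i \<noteq> 0}")
  case True
  have "OC (V,E) m \<subseteq> {f. \<forall>x. (x \<in> V \<longrightarrow> f x \<in> {i. m i \<noteq> 0}) \<and> (x \<notin> V \<longrightarrow> f x = 0)}"
    using OC_val[OF assms] OC_D(1) by blast
  then show ?thesis using finite_subset finite_set_of_finite_funs[OF assms True] by blast
next
  case False
  have "OC (V,E) m = {}"
  proof (rule ccontr)
    assume "OC (V,E) m \<noteq> {}"
    then obtain lam where l: "lam \<in> OC (V,E) m" by blast
    have "{i. m i \<noteq> 0} \<subseteq> lam ` V" using OC_supp[OF l] by blast
    thus False using False assms finite_subset by blast
  qed
  thus ?thesis by simp
qed

lemma joined_in_mono:
  assumes "joined_in (V,E) S u w" "S \<inter> V \<subseteq> S' \<inter> V'"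
  shows "joined_in (V',E) S' u w"
proof -
  obtain ps where "set ps \<subseteq> S \<inter> V" "distinct (u # ps @ [w])" "successively E (u # ps @ [w])"
    using assms(1) unfolding joined_in_def by auto
  thus ?thesis using assms(2) unfolding joined_in_def by (auto intro!: exI[of _ ps])
qed



lemma relab_OC:
  assumes fin: "finite V" and l: "lam \<in> OC (V,E) m"
  and inv1: "\<forall>i\<in>S. \<phi> i \<in> T \<and> \<psi> (\<phi> i) = i" and inv2: "\<forall>j\<in>T. \<psi> j \<in> S \<and> \<phi> (\<psi> j) = j"
  and mono: "\<forall>i\<in>S. \<forall>i'\<in>S. i < i' \<longrightarrow> \<phi> i < \<phi> i'"
  and T0: "0 \<notin> T" and suppS: "\<forall>i. m i \<noteq> 0 \<longrightarrow> i \<in> S"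
  and m': "\<forall>j. m' j = (if j \<in> T then m (\<psi> j) else 0)"
  shows "(\<lambda>v. if v \<in> V then \<phi> (lam v) else 0) \<in> OC (V,E) m'"
proof -
  define lam2 where "lam2 = (\<lambda>v. if v \<in> V then \<phi> (lam v) else 0)"
  have vals: "\<forall>v\<in>V. lam v \<in> S" using OC_val[OF fin l] suppS by blast
  have lt: "(\<phi> a < \<phi> b) = (a < b)" if "a \<in> S" "b \<in> S" for a b
  proof -
    have "a < b \<or> a = b \<or> b < a" by auto
    thus ?thesis using mono that by (metis less_irrefl less_not_sym)
  qed
  have "lam2 \<in> OC (V,E) m'"
  proof (rule OC_memI)
    fix v assume "v \<notin> V" thus "lam2 v = 0" by (simp add: lam2_def)
  next
    fix v assume "v \<in> V"
    hence "lam2 v \<in> T" using vals inv1 by (simp add: lam2_def)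
    thus "1 \<le> lam2 v" using T0 by (cases "lam2 v") auto
  next
    fix u w assume uw: "u \<in> V" "w \<in> V" "u \<noteq> w" "lam2 u = lam2 w"
      and j: "joined_in (V,E) {v\<in>V. lam2 v < lam2 u} u w"
    have eq: "lam u = lam w" using uw vals inv1 unfolding lam2_def by metis
    moreover have "{v\<in>V. lam2 v < lam2 u} = {v\<in>V. lam v < lam u}"
      using uw vals lt eq unfolding lam2_def by auto
    ultimately show False using OC_D(3)[OF l uw(1,2,3)] j by auto
  next
    fix i
    show "m' i = card {v\<in>V. lam2 v = i}"
    proof (cases "i \<in> T")
      case True
      have "{v\<in>V. lam2 v = i} = {v\<in>V. lam v = \<psi> i}"
        using True vals inv1 inv2 unfolding lam2_def by force
      thus ?thesis using m' True OC_D(4)[OF l] by simp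
    next
      case False
      have "{v\<in>V. lam2 v = i} = {}"
        using False vals inv1 unfolding lam2_def by force
      thus ?thesis using m' False by (simp del: Collect_empty_eq)
    qed
  qed
  thus ?thesis unfolding lam2_def .
qed

lemma inv_mono:
  fixes \<phi> \<psi> :: "nat \<Rightarrow> nat"
  assumes inv1: "\<forall>i\<in>S. \<phi> i \<in> T \<and> \<psi> (\<phi> i) = i" and inv2: "\<forall>j\<in>T. \<psi> j \<in> S \<and> \<phi> (\<psi> j) = j"
  and mono: "\<forall>j\<in>T. \<forall>j'\<in>T. j < j' \<longrightarrow> \<psi> j < \<psi> j'"
  shows "\<forall>i\<in>S. \<forall>i'\<in>S. i < i' \<longrightarrow> (\<phi> i :: nat) < \<phi> i'"
proof (intro ballI impI)
  fix i i' assume a: "i \<in> S" "i' \<in> S" "(i::nat) < i'"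
  show "\<phi> i < \<phi> i'"
  proof (rule ccontr)
    assume "\<not> \<phi> i < \<phi> i'"
    hence "\<phi> i' < \<phi> i \<or> \<phi> i' = \<phi> i" by auto
    thus False
    proof
      assume "\<phi> i' < \<phi> i"
      hence "\<psi> (\<phi> i') < \<psi> (\<phi> i)" using mono inv1 a by blast
      thus False using inv1 a by auto
    next
      assume "\<phi> i' = \<phi> i"
      hence "\<psi> (\<phi> i') = \<psi> (\<phi> i)" by simp
      thus False using inv1 a by auto
    qed
  qed
qed

lemma card_relab:
  assumes fin: "finite V"
  and inv1: "\<forall>i\<in>S. \<phi> i \<in> T \<and> \<psi> (\<phi> i) = i" and inv2: "\<forall>j\<in>T. \<psi> j \<in> S \<and> \<phi> (\<psi> j) = j"
  and mono: "\<forall>j\<in>T. \<forall>j'\<in>T. j < j' \<longrightarrow> \<psi> j < (\<psi> j' :: nat)"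
  and S0: "0 \<notin> S" and T0: "0 \<notin> T" and suppS: "\<forall>i. m i \<noteq> 0 \<longrightarrow> i \<in> S"
  and m': "\<forall>j. m' j = (if j \<in> T then m (\<psi> j) else 0)"
  shows "card (OC (V,E) m) = card (OC (V,E) m')"
proof -
  have mono2: "\<forall>i\<in>S. \<forall>i'\<in>S. i < i' \<longrightarrow> \<phi> i < \<phi> i'" using inv_mono[OF inv1 inv2 mono] .
  have suppT: "\<forall>j. m' j \<noteq> 0 \<longrightarrow> j \<in> T" using m' by auto
  have mm: "\<forall>i. m i = (if i \<in> S then m' (\<phi> i) else 0)" using m' inv1 suppS by auto
  define f where "f = (\<lambda>lam v. if v \<in> V then \<phi> (lam v) else 0)"
  define g where "g = (\<lambda>lam v. if v \<in> V then \<psi> (lam v) else (0::nat))"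
  have fi: "f lam \<in> OC (V,E) m'" if "lam \<in> OC (V,E) m" for lam
    unfolding f_def by (rule relab_OC[OF fin that inv1 inv2 mono2 T0 suppS m'])
  have gi: "g lam \<in> OC (V,E) m" if "lam \<in> OC (V,E) m'" for lam
    unfolding g_def by (rule relab_OC[OF fin that inv2 inv1 mono S0 suppT mm])
  have "bij_betw f (OC (V,E) m) (OC (V,E) m')"
  proof (rule bij_betw_byWitness[where f'=g])
    show "\<forall>a\<in>OC (V, E) m. g (f a) = a"
    proof
      fix lam assume l: "lam \<in> OC (V,E) m"
      have vals: "\<forall>v\<in>V. lam v \<in> S" using OC_val[OF fin l] suppS by blast
      show "g (f lam) = lam" using vals inv1 OC_D(1)[OF l] unfolding f_def g_def by auto
    qed
    show "\<forall>a\<in>OC (V, E) m'. f (g a) = a"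
    proof
      fix lam assume l: "lam \<in> OC (V,E) m'"
      have vals: "\<forall>v\<in>V. lam v \<in> T" using OC_val[OF fin l] suppT by blast
      show "f (g lam) = lam" using vals inv2 OC_D(1)[OF l] unfolding f_def g_def by auto
    qed
  qed (use fi gi in auto)
  thus ?thesis by (rule bij_betw_same_card)
qed

lemma quasisym:
  assumes fin: "finite V" and mon: "is_monomial m"
  shows "card (OC (V,E) m) = card (OC (V,E) (mono_of (comp_of m)))"
proof -
  define S where "S = {i. m i \<noteq> 0}"
  have finS: "finite S" using mon unfolding is_monomial_def S_def by auto
  define s where "s = sorted_list_of_set S"
  define k where "k = length s"
  define T where "T = {1..k}"
  define \<psi> where "\<psi> = (\<lambda>j. s ! (j - 1))"
  define \<phi> where "\<phi> = the_inv_into T \<psi>"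
  have ss: "sorted_wrt (<) s" unfolding s_def by (rule strict_sorted_list_of_set)
  have sets: "set s = S" unfolding s_def using finS by simp
  have mono: "\<forall>j\<in>T. \<forall>j'\<in>T. j < j' \<longrightarrow> \<psi> j < \<psi> j'"
    unfolding T_def \<psi>_def k_def
  proof (intro ballI impI)
    fix j j' assume "j \<in> {1..length s}" "j' \<in> {1..length s}" "(j::nat) < j'"
    thus "s ! (j - 1) < s ! (j' - 1)" using sorted_wrt_nth_less[OF ss, of "j - 1" "j' - 1"] by auto
  qed
  have inj: "inj_on \<psi> T"
    by (metis (no_types, lifting) inj_on_def linorder_neqE_nat mono order_less_irrefl)
  have img: "\<psi> ` T = S"
  proof -
    have "\<psi> ` T = set s"
    proof
      show "\<psi> ` T \<subseteq> set s" unfolding T_def \<psi>_def k_def by auto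
      show "set s \<subseteq> \<psi> ` T"
      proof
        fix x assume "x \<in> set s"
        then obtain i where i: "i < k" "s ! i = x" unfolding k_def by (auto simp: in_set_conv_nth)
        hence "Suc i \<in> T" "\<psi> (Suc i) = x" unfolding T_def \<psi>_def by auto
        thus "x \<in> \<psi> ` T" by blast
      qed
    qed
    thus ?thesis using sets by simp
  qed
  have bij: "bij_betw \<psi> T S" using inj img by (simp add: bij_betw_def)
  have inv1: "\<forall>i\<in>S. \<phi> i \<in> T \<and> \<psi> (\<phi> i) = i"
    unfolding \<phi>_def using bij by (metis bij_betw_def f_the_inv_into_f the_inv_into_into subset_refl)
  have inv2: "\<forall>j\<in>T. \<psi> j \<in> S \<and> \<phi> (\<psi> j) = j"
    unfolding \<phi>_def using img inj by (auto simp: the_inv_into_f_f)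
  have S0: "0 \<notin> S" using mon unfolding is_monomial_def S_def by auto
  have T0: "0 \<notin> T" unfolding T_def by auto
  have m': "\<forall>j. mono_of (comp_of m) j = (if j \<in> T then m (\<psi> j) else 0)"
    unfolding mono_of_def comp_of_def T_def \<psi>_def k_def s_def S_def by auto
  show ?thesis
    by (rule card_relab[OF fin inv1 inv2 mono S0 T0 _ m']) (simp add: S_def)
qed



lemma mono_of_snoc: "mono_of (a@[1]) i = (if i = Suc (length a) then 1 else mono_of a i)"
  unfolding mono_of_def by (auto simp: nth_append)

lemma mono_of_top: "mono_of a (Suc (length a)) = 0"
  unfolding mono_of_def by auto

lemma mono_of_nz: "mono_of a j \<noteq> 0 \<Longrightarrow> j \<le> length a"
  unfolding mono_of_def by (auto split: if_splits)

lemma rec_card: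
  assumes fin: "finite V"
  shows "card (OC (V,E) (mono_of (a@[1]))) = (\<Sum>v\<in>V. card (OC (V - {v}, E) (mono_of a)))"
proof -
  define top where "top = Suc (length a)"
  define m where "m = mono_of (a@[1])"
  define m' where "m' = mono_of a"
  have mtop: "m top = 1" unfolding m_def top_def using mono_of_snoc[of a "Suc (length a)"] by simp
  have m'top: "m' top = 0" unfolding m'_def top_def by (simp add: mono_of_top)
  have mi: "i \<noteq> top \<Longrightarrow> m i = m' i" for i unfolding m_def m'_def top_def using mono_of_snoc[of a i] by simp
  have m'le: "m' j \<noteq> 0 \<Longrightarrow> j < top" for j unfolding m'_def top_def using mono_of_nz by fastforce
  have top1: "card {x\<in>V. lam x = top} = 1" if "lam \<in> OC (V,E) m" for lam
    using OC_D(4)[OF that, of top] mtop by simp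
  define P where "P = (\<lambda>v. {lam \<in> OC (V,E) m. lam v = top})"
  have union: "OC (V,E) m = \<Union> (P ` V)"
  proof
    show "OC (V,E) m \<subseteq> \<Union> (P ` V)"
    proof
      fix lam assume l: "lam \<in> OC (V,E) m"
      have "{x\<in>V. lam x = top} \<noteq> {}" using top1[OF l] by (metis card.empty zero_neq_one)
      then obtain v where "v \<in> V" "lam v = top" by blast
      thus "lam \<in> \<Union> (P ` V)" using l unfolding P_def by blast
    qed
  qed (auto simp: P_def)
  have disj: "\<forall>v\<in>V. \<forall>w\<in>V. v \<noteq> w \<longrightarrow> P v \<inter> P w = {}"
  proof (intro ballI impI)
    fix v w assume vw: "v \<in> V" "w \<in> V" "v \<noteq> w"
    show "P v \<inter> P w = {}"
    proof (rule ccontr)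
      assume "P v \<inter> P w \<noteq> {}"
      then obtain lam where l: "lam \<in> OC (V,E) m" "lam v = top" "lam w = top" unfolding P_def by blast
      have "{v,w} \<subseteq> {x\<in>V. lam x = top}" using l vw by auto
      hence "card {v,w} \<le> card {x\<in>V. lam x = top}" using fin by (intro card_mono) auto
      thus False using top1[OF l(1)] vw by simp
    qed
  qed
  have finP: "\<forall>v\<in>V. finite (P v)" using OC_finite[OF fin] unfolding P_def by auto
  have "card (OC (V,E) m) = (\<Sum>v\<in>V. card (P v))"
    unfolding union by (rule card_UN_disjoint[OF fin finP disj])
  also have "\<dots> = (\<Sum>v\<in>V. card (OC (V - {v}, E) m'))"
  proof (rule sum.cong[OF refl])
    fix v assume v: "v \<in> V"
    have finV': "finite (V - {v})" using fin by simp
    have fwd: "lam(v:=0) \<in> OC (V - {v}, E) m'" if l: "lam \<in> P v" for lam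
    proof -
      have l1: "lam \<in> OC (V,E) m" and lv: "lam v = top" using l unfolding P_def by auto
      have single: "{x\<in>V. lam x = top} = {v}"
      proof -
        obtain z where z: "{x\<in>V. lam x = top} = {z}" using top1[OF l1] card_1_singletonE by blast
        moreover have "v \<in> {x\<in>V. lam x = top}" using v lv by simp
        ultimately show ?thesis by simp
      qed
      show ?thesis
      proof (rule OC_memI)
        fix x assume "x \<notin> V - {v}" thus "(lam(v:=0)) x = 0" using OC_D(1)[OF l1] by auto
      next
        fix x assume "x \<in> V - {v}" thus "1 \<le> (lam(v:=0)) x" using OC_D(2)[OF l1] by auto
      next
        fix u w assume uw: "u \<in> V - {v}" "w \<in> V - {v}" "u \<noteq> w" "(lam(v:=0)) u = (lam(v:=0)) w"
          and j: "joined_in (V - {v}, E) {x \<in> V - {v}. (lam(v:=0)) x < (lam(v:=0)) u} u w"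
        have "joined_in (V,E) {x\<in>V. lam x < lam u} u w"
          by (rule joined_in_mono[OF j]) (use uw in auto)
        thus False using OC_D(3)[OF l1, of u w] uw by auto
      next
        fix i
        show "m' i = card {x \<in> V - {v}. (lam(v:=0)) x = i}"
        proof (cases "i = top")
          case True
          have "{x \<in> V - {v}. (lam(v:=0)) x = i} = {}" using single True by auto
          then show ?thesis using m'top True by (simp del: Collect_empty_eq)
        next
          case False
          have "{x \<in> V - {v}. (lam(v:=0)) x = i} = {x\<in>V. lam x = i}" using False lv by auto
          then show ?thesis using OC_D(4)[OF l1, of i] mi[OF False] by simp
        qed
      qed
    qed
    have bwd: "lam(v:=top) \<in> P v" if l: "lam \<in> OC (V - {v}, E) m'" for lam
    proof -
      have lt: "x \<in> V - {v} \<Longrightarrow> lam x < top" for x using OC_val[OF finV' l] m'le by blast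
      have "lam(v:=top) \<in> OC (V,E) m"
      proof (rule OC_memI)
        fix x assume "x \<notin> V" thus "(lam(v:=top)) x = 0" using OC_D(1)[OF l] v by auto
      next
        fix x assume "x \<in> V" thus "1 \<le> (lam(v:=top)) x" using OC_D(2)[OF l] top_def by auto
      next
        fix u w assume uw: "u \<in> V" "w \<in> V" "u \<noteq> w" "(lam(v:=top)) u = (lam(v:=top)) w"
          and j: "joined_in (V, E) {x \<in> V. (lam(v:=top)) x < (lam(v:=top)) u} u w"
        have uv: "u \<noteq> v"
        proof
          assume "u = v" thus False using uw lt[of w] by (auto split: if_splits)
        qed
        have wv: "w \<noteq> v"
        proof
          assume "w = v" thus False using uw lt[of u] by (auto split: if_splits)
        qed
        have "joined_in (V - {v}, E) {x\<in>V - {v}. lam x < lam u} u w"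
          by (rule joined_in_mono[OF j]) (use uw uv lt[of u] in auto)
        thus False using OC_D(3)[OF l, of u w] uw uv wv by auto
      next
        fix i
        show "m i = card {x \<in> V. (lam(v:=top)) x = i}"
        proof (cases "i = top")
          case True
          have "{x \<in> V. (lam(v:=top)) x = i} = {v}" using True v lt by force
          then show ?thesis using mtop True by simp
        next
          case False
          have "{x \<in> V. (lam(v:=top)) x = i} = {x\<in>V - {v}. lam x = i}" using False by auto
          then show ?thesis using OC_D(4)[OF l, of i] mi[OF False] by simp
        qed
      qed
      thus ?thesis unfolding P_def by simp
    qed
    have "bij_betw (\<lambda>lam. lam(v:=0)) (P v) (OC (V - {v}, E) m')"
    proof (rule bij_betw_byWitness[where f'="\<lambda>lam. lam(v:=top)"])
      show "\<forall>a\<in>P v. a(v := 0, v := top) = a" unfolding P_def by auto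
      show "\<forall>a\<in>OC (V - {v}, E) m'. a(v := top, v := 0) = a" using OC_D(1) by fastforce
    qed (use fwd bwd in auto)
    thus "card (P v) = card (OC (V - {v}, E) m')" by (rule bij_betw_same_card)
  qed
  finally show ?thesis unfolding m_def m'_def .
qed



definition maxuniq :: "graph \<Rightarrow> bool" where
  "maxuniq G \<longleftrightarrow> (\<forall>lam. ordered_col G lam \<longrightarrow>
     (\<forall>u\<in>fst G. \<forall>w\<in>fst G. u \<noteq> w \<longrightarrow> lam u = lam w \<longrightarrow> (\<exists>x\<in>fst G. lam u < lam x)))"

lemma two_elems:
  assumes "finite A" "card A \<noteq> 0" "card A \<noteq> 1"
  obtains u w where "u \<in> A" "w \<in> A" "u \<noteq> w"
proof -
  obtain u where u: "u \<in> A" using assms by fastforce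
  have "card (A - {u}) = card A - 1" using assms(1) u by (simp add: card_Diff_singleton)
  hence "card (A - {u}) \<noteq> 0" using assms by linarith
  hence "A - {u} \<noteq> {}" by (metis card.empty)
  then obtain w where "w \<in> A - {u}" by blast
  thus ?thesis using that u by blast
qed

lemma sorted_le_last:
  assumes "sorted (s::nat list)" "x \<in> set s"
  shows "x \<le> last s"
proof -
  obtain i where i: "i < length s" "s ! i = x" using assms(2) by (auto simp: in_set_conv_nth)
  have "s ! i \<le> s ! (length s - 1)" using assms(1) i by (intro sorted_nth_mono) auto
  moreover have "s \<noteq> []" using i by auto
  hence "last s = s ! (length s - 1)" by (simp add: last_conv_nth)
  ultimately show ?thesis using i by simp
qed

lemma rec_main:
  assumes fin: "finite V" and ne: "V \<noteq> {}" and mu: "maxuniq (V,E)"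
  shows "qsF (V,E) = shift1 (\<lambda>m. \<Sum>v\<in>V. qsF (V - {v}, E) m)"
proof (rule ext)
  fix m
  show "qsF (V,E) m = shift1 (\<lambda>m. \<Sum>v\<in>V. qsF (V - {v}, E) m) m"
  proof (cases "is_monomial m \<and> comp_of m \<noteq> [] \<and> last (comp_of m) = 1")
    case True
    define a where "a = butlast (comp_of m)"
    have ca: "comp_of m = a @ [1]" unfolding a_def using True by (metis append_butlast_last_id)
    have "qsF (V,E) m = int (card (OC (V,E) (mono_of (a @ [1]))))"
      unfolding qsF_OC using quasisym[OF fin, of m E] True ca by simp
    also have "\<dots> = (\<Sum>v\<in>V. qsF (V - {v}, E) (mono_of a))"
      unfolding rec_card[OF fin] qsF_OC by simp
    finally show ?thesis unfolding shift1_def a_def using True by simp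
  next
    case False
    have "OC (V,E) m = {}"
    proof (rule ccontr)
      assume "OC (V,E) m \<noteq> {}"
      then obtain lam where l: "lam \<in> OC (V,E) m" by blast
      have m0: "m 0 = 0"
      proof -
        have "{v\<in>V. lam v = 0} = {}" using OC_D(2)[OF l] by fastforce
        thus ?thesis using OC_D(4)[OF l, of 0] by (simp del: Collect_empty_eq)
      qed
      have "{i. m i \<noteq> 0} \<subseteq> lam ` V" using OC_supp[OF l] by blast
      hence fS: "finite {i. m i \<noteq> 0}" using fin finite_subset by blast
      have mon: "is_monomial m" unfolding is_monomial_def using m0 fS by simp
      define S where "S = {i. m i \<noteq> 0}"
      define s where "s = sorted_list_of_set S"
      have sets: "set s = S" unfolding s_def S_def using fS by simp
      obtain v where v: "v \<in> V" using ne by blast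
      have lvS: "lam x \<in> S" if "x \<in> V" for x using OC_val[OF fin l that] unfolding S_def by simp
      have sne: "s \<noteq> []" using sets lvS[OF v] by auto
      hence cne: "comp_of m \<noteq> []" unfolding comp_of_def s_def S_def by simp
      have lst: "last (comp_of m) = m (last s)" unfolding comp_of_def s_def S_def
        using sne[unfolded s_def S_def] by (simp add: last_map)
      define c where "c = last s"
      have cS: "c \<in> S" using sne sets unfolding c_def by auto
      have cmax: "x \<in> S \<Longrightarrow> x \<le> c" for x
        unfolding c_def using sorted_le_last[of s x] sets s_def by simp
      have mc: "m c \<noteq> 1" using False mon cne lst c_def by simp
      have "card {x\<in>V. lam x = c} \<noteq> 0" "card {x\<in>V. lam x = c} \<noteq> 1"
        using OC_D(4)[OF l, of c] mc cS unfolding S_def by auto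
      then obtain u w where uw: "u \<in> {x\<in>V. lam x = c}" "w \<in> {x\<in>V. lam x = c}" "u \<noteq> w"
        using two_elems[of "{x\<in>V. lam x = c}"] fin by auto
      have "ordered_col (V,E) lam" using l unfolding OC_def by simp
      hence "\<forall>u\<in>V. \<forall>w\<in>V. u \<noteq> w \<longrightarrow> lam u = lam w \<longrightarrow> (\<exists>x\<in>V. lam u < lam x)"
        using mu unfolding maxuniq_def by simp
      moreover have "u \<in> V" "w \<in> V" "lam u = lam w" using uw by auto
      ultimately obtain x where "x \<in> V" "lam u < lam x" using uw(3) by blast
      thus False using cmax lvS uw by fastforce
    qed
    hence "qsF (V,E) m = 0" unfolding qsF_OC by simp
    moreover have "shift1 (\<lambda>m. \<Sum>v\<in>V. qsF (V - {v}, E) m) m = 0"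
      unfolding shift1_def using False by argo
    ultimately show ?thesis by simp
  qed
qed



lemma joined_in_map:
  assumes j: "joined_in (A,E) S u w" and uw: "u \<in> A" "w \<in> A" and inj: "inj_on f A"
    and fA: "f ` A \<subseteq> B" and e: "\<forall>x\<in>A. \<forall>y\<in>A. E x y \<longrightarrow> E2 (f x) (f y)"
  shows "joined_in (B,E2) (f ` (S \<inter> A)) (f u) (f w)"
proof -
  obtain ps where ps: "set ps \<subseteq> S \<inter> A" "distinct (u # ps @ [w])" "successively E (u # ps @ [w])"
    using j unfolding joined_in_def by auto
  have sA: "set (u # ps @ [w]) \<subseteq> A" using ps uw by auto
  have "inj_on f (set (u # ps @ [w]))" using inj sA by (rule inj_on_subset)
  hence "distinct (map f (u # ps @ [w]))"
    using ps(2) by (simp only: distinct_map)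
  hence d: "distinct (f u # map f ps @ [f w])" by simp
  have "successively (\<lambda>x y. E2 (f x) (f y)) (u # ps @ [w])"
    by (rule successively_mono[OF ps(3)]) (use sA e in blast)
  hence "successively E2 (map f (u # ps @ [w]))" by (simp only: successively_map)
  hence s: "successively E2 (f u # map f ps @ [f w])" by simp
  have "set (map f ps) \<subseteq> f ` (S \<inter> A) \<inter> B" using ps(1) fA by auto
  thus ?thesis using d s unfolding joined_in_def by (auto intro!: exI[of _ "map f ps"])
qed

lemma iso_OC:
  assumes l: "lam \<in> OC (V,E) m"
    and i1: "\<forall>u\<in>V. \<sigma> u \<in> V' \<and> \<tau> (\<sigma> u) = u" and i2: "\<forall>x\<in>V'. \<tau> x \<in> V \<and> \<sigma> (\<tau> x) = x"
    and e: "\<forall>x\<in>V'. \<forall>y\<in>V'. E' x y \<longrightarrow> E (\<tau> x) (\<tau> y)"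
  shows "(\<lambda>x. if x \<in> V' then lam (\<tau> x) else 0) \<in> OC (V',E') m"
proof (rule OC_memI)
  fix x assume "x \<in> V'" thus "1 \<le> (if x \<in> V' then lam (\<tau> x) else 0)" using i2 OC_D(2)[OF l] by auto
next
  fix x y assume xy: "x \<in> V'" "y \<in> V'" "x \<noteq> y"
    "(if x \<in> V' then lam (\<tau> x) else 0) = (if y \<in> V' then lam (\<tau> y) else 0)"
    and j: "joined_in (V', E') {z \<in> V'. (if z \<in> V' then lam (\<tau> z) else 0) < (if x \<in> V' then lam (\<tau> x) else 0)} x y"
  have inj: "inj_on \<tau> V'" using i2 by (metis inj_on_def)
  have "joined_in (V,E) (\<tau> ` ({z \<in> V'. (if z \<in> V' then lam (\<tau> z) else 0) < (if x \<in> V' then lam (\<tau> x) else 0)} \<inter> V')) (\<tau> x) (\<tau> y)"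
    by (rule joined_in_map[OF j xy(1,2) inj]) (use i2 e in auto)
  hence "joined_in (V,E) {v\<in>V. lam v < lam (\<tau> x)} (\<tau> x) (\<tau> y)"
    by (rule joined_in_mono) (use xy i2 in auto)
  moreover have "\<tau> x \<noteq> \<tau> y" using xy i2 by metis
  ultimately show False using OC_D(3)[OF l, of "\<tau> x" "\<tau> y"] xy i2 by auto
next
  fix i
  have "{x \<in> V'. (if x \<in> V' then lam (\<tau> x) else 0) = i} = \<sigma> ` {v\<in>V. lam v = i}"
  proof
    show "{x \<in> V'. (if x \<in> V' then lam (\<tau> x) else 0) = i} \<subseteq> \<sigma> ` {v\<in>V. lam v = i}"
    proof
      fix x assume "x \<in> {x \<in> V'. (if x \<in> V' then lam (\<tau> x) else 0) = i}"
      thus "x \<in> \<sigma> ` {v\<in>V. lam v = i}" using i2 by (auto intro!: image_eqI[of x \<sigma> "\<tau> x"])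
    qed
  qed (use i1 in auto)
  moreover have "inj_on \<sigma> V" using i1 by (metis inj_on_def)
  ultimately have "card {x \<in> V'. (if x \<in> V' then lam (\<tau> x) else 0) = i} = card {v\<in>V. lam v = i}"
    by (simp add: card_image inj_on_subset)
  thus "m i = card {x \<in> V'. (if x \<in> V' then lam (\<tau> x) else 0) = i}" using OC_D(4)[OF l] by simp
qed simp

lemma iso_qsF:
  assumes i1: "\<forall>u\<in>V. \<sigma> u \<in> V' \<and> \<tau> (\<sigma> u) = u" and i2: "\<forall>x\<in>V'. \<tau> x \<in> V \<and> \<sigma> (\<tau> x) = x"
    and e: "\<forall>u\<in>V. \<forall>w\<in>V. E' (\<sigma> u) (\<sigma> w) = E u w"
  shows "qsF (V,E) = qsF (V',E')"
proof (rule ext)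
  fix m
  have e1: "\<forall>x\<in>V'. \<forall>y\<in>V'. E' x y \<longrightarrow> E (\<tau> x) (\<tau> y)" using e i2 by metis
  have e2: "\<forall>x\<in>V. \<forall>y\<in>V. E x y \<longrightarrow> E' (\<sigma> x) (\<sigma> y)" using e by metis
  define f where "f = (\<lambda>lam x. if x \<in> V' then lam (\<tau> x) else (0::nat))"
  define g where "g = (\<lambda>lam x. if x \<in> V then lam (\<sigma> x) else (0::nat))"
  have "bij_betw f (OC (V,E) m) (OC (V',E') m)"
  proof (rule bij_betw_byWitness[where f'=g])
    show "\<forall>a\<in>OC (V, E) m. g (f a) = a" using i1 OC_D(1) unfolding f_def g_def by fastforce
    show "\<forall>a\<in>OC (V', E') m. f (g a) = a" using i2 OC_D(1) unfolding f_def g_def by fastforce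
    show "f ` OC (V, E) m \<subseteq> OC (V', E') m" unfolding f_def using iso_OC[OF _ i1 i2 e1] by blast
    show "g ` OC (V', E') m \<subseteq> OC (V, E) m" unfolding g_def using iso_OC[OF _ i2 i1 e2] by blast
  qed
  thus "qsF (V,E) m = qsF (V',E') m" unfolding qsF_OC by (simp add: bij_betw_same_card)
qed



lemma stay_in:
  assumes "successively E (x # xs)" "x \<in> A" "set xs \<subseteq> A \<union> B" "\<forall>a\<in>A. \<forall>b\<in>B. \<not> E a b"
  shows "set xs \<subseteq> A"
  using assms
proof (induction xs arbitrary: x)
  case Nil thus ?case by simp
next
  case (Cons y ys)
  have "E x y" using Cons.prems(1) by simp
  hence yA: "y \<in> A" using Cons.prems(2,3,4) by auto
  have "set ys \<subseteq> A" using Cons.IH[of y] Cons.prems yA by (simp add: successively_Cons)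
  thus ?case using yA by simp
qed

lemma joined_restrict:
  assumes j: "joined_in (A \<union> B, E) S u w" and u: "u \<in> A" and w: "w \<in> A \<union> B"
    and ne: "\<forall>a\<in>A. \<forall>b\<in>B. \<not> E a b"
  shows "w \<in> A \<and> joined_in (A, E) S u w"
proof -
  obtain ps where ps: "set ps \<subseteq> S \<inter> (A \<union> B)" "distinct (u # ps @ [w])" "successively E (u # ps @ [w])"
    using j unfolding joined_in_def by auto
  have "set (ps @ [w]) \<subseteq> A" by (rule stay_in[OF ps(3) u]) (use ps(1) w ne in auto)
  thus ?thesis using ps unfolding joined_in_def by (auto intro!: exI[of _ ps])
qed

lemma union_qsF:
  assumes fA: "finite A" and fB: "finite B" and dj: "A \<inter> B = {}"
    and ne: "\<forall>x\<in>A. \<forall>y\<in>B. \<not> E x y \<and> \<not> E y x"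
  shows "qsF (A \<union> B, E) m = qmul (qsF (A,E)) (qsF (B,E)) m"
proof -
  define Idx where "Idx = {a. \<forall>i. a i \<le> m i}"
  have q: "qmul (qsF (A,E)) (qsF (B,E)) m = (\<Sum>a\<in>Idx. qsF (A,E) a * qsF (B,E) (\<lambda>i. m i - a i))"
    unfolding qmul_def Idx_def ..
  have fAB: "finite (A \<union> B)" using fA fB by simp
  show ?thesis
  proof (cases "finite {i. m i \<noteq> 0}")
    case False
    have "OC (A \<union> B, E) m = {}"
    proof (rule ccontr)
      assume "OC (A \<union> B, E) m \<noteq> {}"
      then obtain lam where l: "lam \<in> OC (A \<union> B, E) m" by blast
      have "{i. m i \<noteq> 0} \<subseteq> lam ` (A \<union> B)" using OC_supp[OF l] by blast
      thus False using False fAB finite_subset by blast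
    qed
    moreover have "infinite Idx"
    proof
      assume fI: "finite Idx"
      define e where "e = (\<lambda>(i::nat) (j::nat). if j = i then 1 else (0::nat))"
      have "inj_on e {i. m i \<noteq> 0}" unfolding e_def inj_on_def by (metis zero_neq_one)
      moreover have "e ` {i. m i \<noteq> 0} \<subseteq> Idx" unfolding e_def Idx_def by auto
      ultimately have "finite {i. m i \<noteq> 0}" using fI finite_subset finite_image_iff by metis
      thus False using False by simp
    qed
    ultimately show ?thesis unfolding q qsF_OC by simp
  next
    case True
    define Sp where "Sp = {i. m i \<noteq> 0}"
    define b where "b = Max (m ` Sp)"
    have fI: "finite Idx"
    proof -
      have "Idx \<subseteq> {f. \<forall>x. (x \<in> Sp \<longrightarrow> f x \<in> {0..b}) \<and> (x \<notin> Sp \<longrightarrow> f x = 0)}"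
      proof
        fix a assume "a \<in> Idx"
        hence a: "\<forall>i. a i \<le> m i" unfolding Idx_def by simp
        have mb: "m x \<le> b" if "x \<in> Sp" for x
          unfolding b_def by (rule Max_ge) (use True that Sp_def in auto)
        have "x \<in> Sp \<Longrightarrow> a x \<le> b" for x
          using a[rule_format, of x] mb[of x] by linarith
        moreover have "x \<notin> Sp \<Longrightarrow> a x = 0" for x using a[rule_format, of x] unfolding Sp_def by simp
        ultimately show "a \<in> {f. \<forall>x. (x \<in> Sp \<longrightarrow> f x \<in> {0..b}) \<and> (x \<notin> Sp \<longrightarrow> f x = 0)}" by auto
      qed
      moreover have "finite {f. \<forall>x. (x \<in> Sp \<longrightarrow> f x \<in> {0..b}) \<and> (x \<notin> Sp \<longrightarrow> f x = (0::nat))}"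
        by (rule finite_set_of_finite_funs) (use True Sp_def in auto)
      ultimately show ?thesis using finite_subset by blast
    qed
    define cnt where "cnt = (\<lambda>(lam::nat\<Rightarrow>nat) (i::nat). card {v\<in>A. lam v = i})"
    define Q where "Q = (\<lambda>a. {lam \<in> OC (A \<union> B, E) m. cnt lam = a})"
    have un: "OC (A \<union> B, E) m = \<Union> (Q ` Idx)"
    proof
      show "OC (A \<union> B, E) m \<subseteq> \<Union> (Q ` Idx)"
      proof
        fix lam assume l: "lam \<in> OC (A \<union> B, E) m"
        have "cnt lam i \<le> m i" for i
          unfolding cnt_def OC_D(4)[OF l, of i] by (rule card_mono) (use fAB in auto)
        hence "cnt lam \<in> Idx" unfolding Idx_def by simp
        thus "lam \<in> \<Union> (Q ` Idx)" using l unfolding Q_def by blast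
      qed
    qed (auto simp: Q_def)
    have "card (OC (A \<union> B, E) m) = (\<Sum>a\<in>Idx. card (Q a))"
      unfolding un by (rule card_UN_disjoint[OF fI]) (use OC_finite[OF fAB] in \<open>auto simp: Q_def\<close>)
    also have "\<dots> = (\<Sum>a\<in>Idx. card (OC (A,E) a) * card (OC (B,E) (\<lambda>i. m i - a i)))"
    proof (rule sum.cong[OF refl])
      fix a assume aI: "a \<in> Idx"
      define h where "h = (\<lambda>lam. (\<lambda>v. if v \<in> A then lam v else (0::nat), \<lambda>v. if v \<in> B then lam v else (0::nat)))"
      define h' where "h' = (\<lambda>(l1::nat\<Rightarrow>nat, l2::nat\<Rightarrow>nat). \<lambda>v. if v \<in> A then l1 v else l2 v)"
      have fwd: "h lam \<in> OC (A,E) a \<times> OC (B,E) (\<lambda>i. m i - a i)" if l: "lam \<in> Q a" for lam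
      proof -
        have l1: "lam \<in> OC (A \<union> B, E) m" and ca: "cnt lam = a" using l unfolding Q_def by auto
        have "(\<lambda>v. if v \<in> A then lam v else 0) \<in> OC (A,E) a"
        proof (rule OC_memI)
          fix u w assume uw: "u \<in> A" "w \<in> A" "u \<noteq> w"
            "(if u \<in> A then lam u else 0) = (if w \<in> A then lam w else 0)"
            and j: "joined_in (A, E) {v \<in> A. (if v \<in> A then lam v else 0) < (if u \<in> A then lam u else 0)} u w"
          have "joined_in (A \<union> B, E) {v \<in> A \<union> B. lam v < lam u} u w"
            by (rule joined_in_mono[OF j]) (use uw in auto)
          thus False using OC_D(3)[OF l1, of u w] uw by auto
        next
          fix i
          have "{v \<in> A. (if v \<in> A then lam v else 0) = i} = {v \<in> A. lam v = i}" by auto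
          thus "a i = card {v \<in> A. (if v \<in> A then lam v else 0) = i}"
            using ca unfolding cnt_def by auto
        qed (use OC_D(2)[OF l1] in auto)
        moreover have "(\<lambda>v. if v \<in> B then lam v else 0) \<in> OC (B,E) (\<lambda>i. m i - a i)"
        proof (rule OC_memI)
          fix u w assume uw: "u \<in> B" "w \<in> B" "u \<noteq> w"
            "(if u \<in> B then lam u else 0) = (if w \<in> B then lam w else 0)"
            and j: "joined_in (B, E) {v \<in> B. (if v \<in> B then lam v else 0) < (if u \<in> B then lam u else 0)} u w"
          have "joined_in (A \<union> B, E) {v \<in> A \<union> B. lam v < lam u} u w"
            by (rule joined_in_mono[OF j]) (use uw in auto)
          thus False using OC_D(3)[OF l1, of u w] uw by auto
        next
          fix i
          have "{v\<in>A \<union> B. lam v = i} = {v\<in>A. lam v = i} \<union> {v\<in>B. lam v = i}" by auto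
          hence "card {v\<in>A \<union> B. lam v = i} = card {v\<in>A. lam v = i} + card {v\<in>B. lam v = i}"
            using fA fB dj by (simp add: card_Un_disjoint disjoint_iff)
          hence "m i = a i + card {v\<in>B. lam v = i}" using OC_D(4)[OF l1, of i] ca unfolding cnt_def by auto
          moreover have "{v \<in> B. (if v \<in> B then lam v else 0) = i} = {v \<in> B. lam v = i}" by auto
          ultimately show "m i - a i = card {v \<in> B. (if v \<in> B then lam v else 0) = i}" by simp
        qed (use OC_D(2)[OF l1] in auto)
        ultimately show ?thesis unfolding h_def by simp
      qed
      have bwd: "h' p \<in> Q a" if p: "p \<in> OC (A,E) a \<times> OC (B,E) (\<lambda>i. m i - a i)" for p
      proof -
        obtain l1 l2 where pp: "p = (l1, l2)" by (cases p)
        have L1: "l1 \<in> OC (A,E) a" and L2: "l2 \<in> OC (B,E) (\<lambda>i. m i - a i)" using p pp by auto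
        define lam where "lam = (\<lambda>v. if v \<in> A then l1 v else l2 v)"
        have hp: "h' p = lam" unfolding pp h'_def lam_def by simp
        have lB: "v \<in> B \<Longrightarrow> lam v = l2 v" for v using dj unfolding lam_def by auto
        have lA: "v \<in> A \<Longrightarrow> lam v = l1 v" for v unfolding lam_def by auto
        have cA: "{v\<in>A. lam v = i} = {v\<in>A. l1 v = i}" for i using lA by auto
        have "lam \<in> OC (A \<union> B, E) m"
        proof (rule OC_memI)
          fix v assume "v \<notin> A \<union> B" thus "lam v = 0" using OC_D(1)[OF L1] OC_D(1)[OF L2] lam_def by auto
        next
          fix v assume "v \<in> A \<union> B" thus "1 \<le> lam v" using OC_D(2)[OF L1] OC_D(2)[OF L2] lA lB by auto
        next
          fix u w assume uw: "u \<in> A \<union> B" "w \<in> A \<union> B" "u \<noteq> w" "lam u = lam w"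
            and j: "joined_in (A \<union> B, E) {v \<in> A \<union> B. lam v < lam u} u w"
          show False
          proof (cases "u \<in> A")
            case True
            have r: "w \<in> A \<and> joined_in (A, E) {v \<in> A \<union> B. lam v < lam u} u w"
              by (rule joined_restrict[OF j True uw(2)]) (use ne in blast)
            have "joined_in (A,E) {v\<in>A. l1 v < l1 u} u w"
              by (rule joined_in_mono[of A E]) (use r True lA in auto)
            thus False using OC_D(3)[OF L1, of u w] r True uw lA by auto
          next
            case False
            hence uB: "u \<in> B" using uw by auto
            have j': "joined_in (B \<union> A, E) {v \<in> A \<union> B. lam v < lam u} u w" using j by (simp add: Un_commute)
            have r: "w \<in> B \<and> joined_in (B, E) {v \<in> A \<union> B. lam v < lam u} u w"
              by (rule joined_restrict[OF j' uB]) (use uw ne in auto)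
            have "joined_in (B,E) {v\<in>B. l2 v < l2 u} u w"
              by (rule joined_in_mono[of B E]) (use r uB lB in auto)
            thus False using OC_D(3)[OF L2, of u w] r uB uw lB by auto
          qed
        next
          fix i
          have "{v\<in>A \<union> B. lam v = i} = {v\<in>A. l1 v = i} \<union> {v\<in>B. l2 v = i}" using lA lB by auto
          hence "card {v\<in>A \<union> B. lam v = i} = card {v\<in>A. l1 v = i} + card {v\<in>B. l2 v = i}"
            using fA fB dj by (simp add: card_Un_disjoint disjoint_iff)
          moreover have "a i \<le> m i" using aI unfolding Idx_def by simp
          ultimately show "m i = card {v\<in>A \<union> B. lam v = i}"
            using OC_D(4)[OF L1, of i] OC_D(4)[OF L2, of i] by simp
        qed
        moreover have "cnt lam = a" unfolding cnt_def using cA OC_D(4)[OF L1] by auto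
        ultimately show ?thesis unfolding hp Q_def by simp
      qed
      have "bij_betw h (Q a) (OC (A,E) a \<times> OC (B,E) (\<lambda>i. m i - a i))"
      proof (rule bij_betw_byWitness[where f'=h'])
        show "\<forall>x\<in>Q a. h' (h x) = x"
        proof
          fix lam assume "lam \<in> Q a"
          hence l: "lam \<in> OC (A \<union> B, E) m" unfolding Q_def by simp
          show "h' (h lam) = lam" unfolding h_def h'_def using OC_D(1)[OF l] by auto
        qed
        show "\<forall>p\<in>OC (A,E) a \<times> OC (B,E) (\<lambda>i. m i - a i). h (h' p) = p"
        proof
          fix p assume p: "p \<in> OC (A,E) a \<times> OC (B,E) (\<lambda>i. m i - a i)"
          obtain l1 l2 where pp: "p = (l1, l2)" by (cases p)
          have L1: "l1 \<in> OC (A,E) a" and L2: "l2 \<in> OC (B,E) (\<lambda>i. m i - a i)" using p pp by auto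
          have X: "(\<lambda>v. if v \<in> A then (if v \<in> A then l1 v else l2 v) else 0) = l1" using OC_D(1)[OF L1] by (auto simp: fun_eq_iff)
          have Y: "(\<lambda>v. if v \<in> B then (if v \<in> A then l1 v else l2 v) else 0) = l2"
            using OC_D(1)[OF L2] dj by (auto simp: fun_eq_iff)
          have H: "h' (l1,l2) = (\<lambda>v. if v \<in> A then l1 v else l2 v)" unfolding h'_def by simp
          show "h (h' p) = p" unfolding pp h_def H by (simp only: prod.inject X Y)
        qed
        show "h ` Q a \<subseteq> OC (A,E) a \<times> OC (B,E) (\<lambda>i. m i - a i)" using fwd by blast
        show "h' ` (OC (A,E) a \<times> OC (B,E) (\<lambda>i. m i - a i)) \<subseteq> Q a" using bwd by blast
      qed
      hence "card (Q a) = card (OC (A,E) a \<times> OC (B,E) (\<lambda>i. m i - a i))" by (rule bij_betw_same_card)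
      thus "card (Q a) = card (OC (A,E) a) * card (OC (B,E) (\<lambda>i. m i - a i))"
        by (simp add: card_cartesian_product)
    qed
    finally show ?thesis unfolding q qsF_OC by simp
  qed
qed



lemma qsF_empty: "qsF ({}, E) = qone"
proof (rule ext)
  fix m
  show "qsF ({},E) m = qone m"
  proof (cases "m = (\<lambda>_. 0)")
    case True
    have "OC ({},E) m = {\<lambda>_. 0}"
    proof
      show "OC ({},E) m \<subseteq> {\<lambda>_. 0}"
      proof
        fix lam assume l: "lam \<in> OC ({},E) m"
        have "lam = (\<lambda>_. 0)" by (rule ext) (use OC_D(1)[OF l] in simp)
        thus "lam \<in> {\<lambda>_. 0}" by simp
      qed
      show "{\<lambda>_. 0} \<subseteq> OC ({},E) m" using True by (auto intro!: OC_memI)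
    qed
    thus ?thesis using True unfolding qsF_OC qone_def by simp
  next
    case False
    have "OC ({},E) m = {}"
    proof (rule ccontr)
      assume "OC ({},E) m \<noteq> {}"
      then obtain lam where l: "lam \<in> OC ({},E) m" by blast
      have "m i = 0" for i using OC_D(4)[OF l, of i] by simp
      hence "m = (\<lambda>_. 0)" by (intro ext) simp
      thus False using False by simp
    qed
    thus ?thesis using False unfolding qsF_OC qone_def by simp
  qed
qed

lemma qM1_char: "(is_monomial m \<and> comp_of m = [1]) \<longleftrightarrow> (\<exists>c\<ge>1. m = (\<lambda>i. if i = c then 1 else 0))"
proof
  assume a: "is_monomial m \<and> comp_of m = [1]"
  define S where "S = {i. m i \<noteq> 0}"
  have fS: "finite S" using a unfolding is_monomial_def S_def by simp
  have "map m (sorted_list_of_set S) = [1]" using a unfolding comp_of_def S_def by simp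
  then obtain c where c: "sorted_list_of_set S = [c]" "m c = 1" by (auto simp: map_eq_Cons_conv)
  have "S = set (sorted_list_of_set S)" using fS by simp
  also have "\<dots> = {c}" using c(1) by simp
  finally have Sc: "S = {c}" .
  have m: "m i = (if i = c then 1 else 0)" for i
  proof (cases "i = c")
    case True thus ?thesis using c(2) by simp
  next
    case False
    hence "i \<notin> S" using Sc by simp
    thus ?thesis using False unfolding S_def by simp
  qed
  have "m 0 = 0" using a unfolding is_monomial_def by simp
  hence "c \<noteq> 0" using c(2) by (metis zero_neq_one)
  hence "c \<ge> 1" by simp
  moreover have "m = (\<lambda>i. if i = c then 1 else 0)" using m by (intro ext) simp
  ultimately show "\<exists>c\<ge>1. m = (\<lambda>i. if i = c then 1 else 0)" by blast
next
  assume "\<exists>c\<ge>1. m = (\<lambda>i. if i = c then 1 else 0)"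
  then obtain c where c: "c \<ge> 1" "m = (\<lambda>i. if i = c then 1 else 0)" by blast
  have S: "{i. m i \<noteq> 0} = {c}" using c(2) by auto
  have "is_monomial m" unfolding is_monomial_def S using c by simp
  moreover have "comp_of m = [1]" unfolding comp_of_def S using c(2) by simp
  ultimately show "is_monomial m \<and> comp_of m = [1]" by simp
qed

lemma card_single_col: "card {v\<in>{x}. lam v = i} = (if lam x = i then 1 else 0)"
proof (cases "lam x = i")
  case True
  hence "{v\<in>{x}. lam v = i} = {x}" by auto
  thus ?thesis using True by simp
next
  case False
  hence "{v\<in>{x}. lam v = i} = {}" by auto
  thus ?thesis using False by simp
qed

lemma qsF_single: "qsF ({x}, E) = qM [1]"
proof (rule ext)
  fix m
  show "qsF ({x},E) m = qM [1] m"
  proof (cases "\<exists>c\<ge>1. m = (\<lambda>i. if i = c then 1 else 0)")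
    case True
    then obtain c where c: "c \<ge> 1" "m = (\<lambda>i. if i = c then 1 else 0)" by blast
    have "OC ({x},E) m = {\<lambda>v. if v = x then c else 0}"
    proof
      show "OC ({x},E) m \<subseteq> {\<lambda>v. if v = x then c else 0}"
      proof
        fix lam assume l: "lam \<in> OC ({x},E) m"
        have "m (lam x) = 1" using OC_D(4)[OF l, of "lam x"] card_single_col[of x lam "lam x"] by simp
        hence lc: "lam x = c" using c(2) by (cases "lam x = c") simp_all
        have "lam = (\<lambda>v. if v = x then c else 0)"
        proof
          fix v show "lam v = (if v = x then c else 0)" using OC_D(1)[OF l, of v] lc by (cases "v = x") simp_all
        qed
        thus "lam \<in> {\<lambda>v. if v = x then c else 0}" by simp
      qed
      show "{\<lambda>v. if v = x then c else 0} \<subseteq> OC ({x},E) m"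
      proof
        fix lam assume "lam \<in> {\<lambda>v. if v = x then c else (0::nat)}"
        hence lam: "lam = (\<lambda>v. if v = x then c else 0)" by simp
        show "lam \<in> OC ({x},E) m"
        proof (rule OC_memI)
          fix i show "m i = card {v\<in>{x}. lam v = i}"
            unfolding card_single_col using c(2) lam by simp
        qed (use lam c in auto)
      qed
    qed
    moreover have "qM [1] m = 1" unfolding qM_def using qM1_char True by simp
    ultimately show ?thesis unfolding qsF_OC by simp
  next
    case False
    have "OC ({x},E) m = {}"
    proof (rule ccontr)
      assume "OC ({x},E) m \<noteq> {}"
      then obtain lam where l: "lam \<in> OC ({x},E) m" by blast
      have "m i = (if i = lam x then 1 else 0)" for i
        using OC_D(4)[OF l, of i] card_single_col[of x lam i] by auto
      hence "m = (\<lambda>i. if i = lam x then 1 else 0)" by (intro ext) simp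
      moreover have "lam x \<ge> 1" using OC_D(2)[OF l] by simp
      ultimately show False using False by blast
    qed
    moreover have "qM [1] m = 0" unfolding qM_def using qM1_char False by simp
    ultimately show ?thesis unfolding qsF_OC by simp
  qed
qed

lemma edgeless_qsF:
  assumes "finite A" "\<forall>x\<in>A. \<forall>y\<in>A. \<not> E x y"
  shows "qsF (A,E) = qpow (qM [1]) (card A)"
  using assms
proof (induction A rule: finite_induct)
  case empty
  show ?case by (simp add: qsF_empty qpow_def)
next
  case (insert x F)
  have "qsF (insert x F, E) = qsF ({x} \<union> F, E)" by simp
  also have "\<dots> = qmul (qsF ({x},E)) (qsF (F,E))"
    by (rule ext, rule union_qsF) (use insert in auto)
  also have "\<dots> = qmul (qM [1]) (qpow (qM [1]) (card F))"
    using insert by (simp add: qsF_single)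
  also have "\<dots> = qpow (qM [1]) (card (insert x F))"
    using insert by (simp add: qpow_def)
  finally show ?case .
qed

lemma succ_upt:
  assumes "\<forall>i. a \<le> i \<longrightarrow> Suc i < b \<longrightarrow> E i (Suc i)"
  shows "successively E [a..<b]"
  unfolding successively_conv_nth using assms by (auto simp del: upt_Suc simp add: nth_upt)

lemma maxuniq_lin:
  assumes e: "\<forall>i. Suc i < n \<longrightarrow> E i (Suc i)"
  shows "maxuniq ({0..<n},E)"
proof -
  have key: False if o: "ordered_col ({0..<n},E) lam" and uw: "u < w" "w < n" "lam u = lam w"
    and mx: "\<forall>x<n. lam x \<le> lam u" for lam u w
  proof -
    define w' where "w' = (LEAST j. u < j \<and> lam j = lam u)"
    have w'1: "u < w' \<and> lam w' = lam u" unfolding w'_def by (rule LeastI[of _ w]) (use uw in auto)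
    have w'2: "w' \<le> w" unfolding w'_def by (rule Least_le) (use uw in auto)
    have btw: "lam j < lam u" if "u < j" "j < w'" for j
    proof -
      have "lam j \<noteq> lam u" using not_less_Least[of j "\<lambda>j. u < j \<and> lam j = lam u"] that unfolding w'_def by auto
      thus ?thesis using mx that w'2 uw by (metis le_neq_implies_less less_trans order_less_le_trans)
    qed
    have lst: "u # [Suc u..<w'] @ [w'] = [u..<Suc w']"
      using w'1 by (simp add: upt_conv_Cons)
    have "joined_in ({0..<n},E) {v\<in>{0..<n}. lam v < lam u} u w'"
      unfolding joined_in_def
    proof (intro exI[of _ "[Suc u..<w']"] conjI)
      show "set [Suc u..<w'] \<subseteq> {v\<in>{0..<n}. lam v < lam u} \<inter> fst ({0..<n}, E)"
        using btw w'2 uw by auto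
      show "distinct (u # [Suc u..<w'] @ [w'])" unfolding lst by simp
      show "successively (snd ({0..<n}, E)) (u # [Suc u..<w'] @ [w'])"
        unfolding lst by (rule succ_upt) (use e w'2 uw in auto)
    qed
    moreover have "u \<in> {0..<n}" "w' \<in> {0..<n}" "u \<noteq> w'" using w'1 w'2 uw by auto
    moreover have "\<forall>u\<in>{0..<n}. \<forall>w\<in>{0..<n}. u \<noteq> w \<and> lam u = lam w \<longrightarrow>
        \<not> joined_in ({0..<n},E) {v\<in>{0..<n}. lam v < lam u} u w"
      using o unfolding ordered_col_def by simp
    ultimately show False using w'1 by (metis (no_types, lifting))
  qed
  show ?thesis unfolding maxuniq_def
  proof (intro allI impI ballI)
    fix lam u w assume o: "ordered_col ({0..<n},E) lam" and uw: "u \<in> fst ({0..<n},E)" "w \<in> fst ({0..<n},E)"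
      "u \<noteq> w" "lam u = lam w"
    show "\<exists>x\<in>fst ({0..<n},E). lam u < lam x"
    proof (rule ccontr)
      assume "\<not> ?thesis"
      hence mx: "\<forall>x<n. lam x \<le> lam u" by (auto simp: not_less)
      show False
      proof (cases "u < w")
        case True thus False using key[OF o True] uw mx by auto
      next
        case False
        hence "w < u" using uw by auto
        thus False using key[OF o, of w u] uw mx by auto
      qed
    qed
  qed
qed



lemma maxuniq_star: "maxuniq ({0..<n}, \<lambda>u v. u \<noteq> v \<and> (u = 0 \<or> v = 0))" (is "maxuniq ({0..<n}, ?E)")
  unfolding maxuniq_def
proof (intro allI impI ballI)
  fix lam u w assume o: "ordered_col ({0..<n},?E) lam" and uw: "u \<in> fst ({0..<n},?E)" "w \<in> fst ({0..<n},?E)"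
    "u \<noteq> w" "lam u = lam w"
  have nj: "\<not> joined_in ({0..<n},?E) {v\<in>{0..<n}. lam v < lam a} a b"
    if "a < n" "b < n" "a \<noteq> b" "lam a = lam b" for a b
  proof -
    have ord: "\<forall>a\<in>{0..<n}. \<forall>b\<in>{0..<n}. a \<noteq> b \<and> lam a = lam b \<longrightarrow>
        \<not> joined_in ({0..<n},?E) {v\<in>{0..<n}. lam v < lam a} a b"
      using o unfolding ordered_col_def by simp
    have "a \<in> {0..<n}" "b \<in> {0..<n}" using that by auto
    thus ?thesis using ord that(3,4) by blast
  qed
  have edge: "joined_in ({0..<n},?E) S a b" if "a \<noteq> b" "a = 0 \<or> b = 0" for a b S
    unfolding joined_in_def by (rule exI[of _ "[]"]) (use that in auto)
  show "\<exists>x\<in>fst ({0..<n},?E). lam u < lam x"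
  proof (rule ccontr)
    assume "\<not> ?thesis"
    hence mx: "\<forall>x<n. lam x \<le> lam u" by (auto simp: not_less)
    have un: "u < n" and wn: "w < n" using uw by auto
    show False
    proof (cases "u = 0 \<or> w = 0")
      case True
      have "joined_in ({0..<n},?E) {v\<in>{0..<n}. lam v < lam u} u w"
        by (rule edge) (use True uw(3) in auto)
      with nj[OF un wn uw(3,4)] show False by (rule notE)
    next
      case False
      have n0: "0 < n" using un by auto
      have e0: "joined_in ({0..<n},?E) {v\<in>{0..<n}. lam v < lam u} u 0"
        by (rule edge) (use False in auto)
      have "lam 0 \<noteq> lam u"
      proof
        assume eq: "lam 0 = lam u"
        have "u \<noteq> 0" using False by simp
        hence "\<not> joined_in ({0..<n},?E) {v\<in>{0..<n}. lam v < lam u} u 0"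
          by (rule nj[OF un n0 _ eq[symmetric]])
        thus False using e0 by (rule notE)
      qed
      moreover have "lam 0 \<le> lam u" using mx n0 by blast
      ultimately have l0: "lam 0 < lam u" by linarith
      have "joined_in ({0..<n},?E) {v\<in>{0..<n}. lam v < lam u} u w"
        unfolding joined_in_def by (rule exI[of _ "[0]"]) (use False l0 n0 uw(3) in simp)
      with nj[OF un wn uw(3,4)] show False by (rule notE)
    qed
  qed
qed



lemma shift1_scale: "shift1 (\<lambda>m. c * f m) = (\<lambda>m. c * shift1 f m)"
  by (auto simp: shift1_def fun_eq_iff)

lemma skip_qsF:
  assumes v: "v < n"
    and e: "\<forall>x<n-1. \<forall>y<n-1. E (if x < v then x else Suc x) (if y < v then y else Suc y) = E x y"
  shows "qsF ({0..<n} - {v}, E) = qsF ({0..<n-1}, E)"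
proof -
  have "qsF ({0..<n-1},E) = qsF ({0..<n}-{v},E)"
    by (rule iso_qsF[where \<sigma>="\<lambda>x. if x < v then x else Suc x" and \<tau>="\<lambda>y. if y < v then y else y - 1"])
       (use v e in auto)
  thus ?thesis by simp
qed

lemma path_shift: "qsF ({k..<n}, \<lambda>u v. u + 1 = v \<or> v + 1 = u) = qsF ({0..<n-k}, \<lambda>u v. u + 1 = v \<or> v + 1 = u)"
  by (rule iso_qsF[where \<sigma>="\<lambda>x. x - k" and \<tau>="\<lambda>y. y + k"]) auto

lemma K_rec:
  assumes n: "1 \<le> n"
  shows "qsF (complete_graph n) = (\<lambda>m. int n * shift1 (qsF (complete_graph (n - 1))) m)"
proof -
  define E where "E = (\<lambda>u v::nat. u \<noteq> v)"
  have r: "qsF ({0..<n},E) = shift1 (\<lambda>m. \<Sum>v\<in>{0..<n}. qsF ({0..<n}-{v},E) m)"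
    by (rule rec_main) (use n in \<open>auto intro!: maxuniq_lin simp: E_def\<close>)
  have d: "qsF ({0..<n}-{v},E) = qsF ({0..<n-1},E)" if "v < n" for v
    by (rule skip_qsF) (use that in \<open>auto simp: E_def\<close>)
  have "(\<lambda>m. \<Sum>v\<in>{0..<n}. qsF ({0..<n}-{v},E) m) = (\<lambda>m. int n * qsF ({0..<n-1},E) m)"
    using d by simp
  thus ?thesis using r unfolding complete_graph_def E_def by (simp add: shift1_scale)
qed

lemma c1:
  fixes n v u :: nat
  assumes "v < n" "u < n - 1"
  shows "(if u + v + 1 < n then u + v + 1 else u + v + 1 - n) < n \<and>
         (if u + v + 1 < n then u + v + 1 else u + v + 1 - n) \<noteq> v \<and>
         (\<lambda>y. if v < y then y - v - 1 else y + n - v - 1) (if u + v + 1 < n then u + v + 1 else u + v + 1 - n) = u"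
  using assms by (split if_split; simp; arith)

lemma c2:
  fixes n v y :: nat
  assumes "v < n" "y < n" "y \<noteq> v"
  shows "(if v < y then y - v - 1 else y + n - v - 1) < n - 1 \<and>
         (\<lambda>x. if x + v + 1 < n then x + v + 1 else x + v + 1 - n) (if v < y then y - v - 1 else y + n - v - 1) = y"
  using assms by (split if_split; simp; arith)

lemma c3:
  fixes n v u w :: nat
  assumes "v < n" "u < n - 1" "w < n - 1" "3 \<le> n"
  defines "a \<equiv> (if u + v + 1 < n then u + v + 1 else u + v + 1 - n)"
  defines "b \<equiv> (if w + v + 1 < n then w + v + 1 else w + v + 1 - n)"
  shows "(a \<noteq> b \<and> (a + 1 = b \<or> b + 1 = a \<or> (a = 0 \<and> b = n - 1) \<or> (b = 0 \<and> a = n - 1)))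
     = (u + 1 = w \<or> w + 1 = u)"
proof (cases "u + v + 1 < n")
  case True note T1 = this
  show ?thesis
  proof (cases "w + v + 1 < n")
    case True
    thus ?thesis using T1 assms(1-4) unfolding a_def b_def by simp arith
  next
    case False
    thus ?thesis using T1 assms(1-4) unfolding a_def b_def by simp arith
  qed
next
  case False note F1 = this
  show ?thesis
  proof (cases "w + v + 1 < n")
    case True
    thus ?thesis using F1 assms(1-4) unfolding a_def b_def by simp arith
  next
    case False
    thus ?thesis using F1 assms(1-4) unfolding a_def b_def by simp arith
  qed
qed

lemma C_rec:
  assumes n: "3 \<le> n"
  shows "qsF (cycle_graph n) = (\<lambda>m. int n * shift1 (qsF (path_graph (n - 1))) m)"
proof -
  define E where "E = snd (cycle_graph n)"
  define Ep where "Ep = (\<lambda>u v::nat. u + 1 = v \<or> v + 1 = u)"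
  have Edef: "E u w = (u \<noteq> w \<and> (u + 1 = w \<or> w + 1 = u \<or> (u = 0 \<and> w = n - 1) \<or> (w = 0 \<and> u = n - 1)))" for u w
    unfolding E_def cycle_graph_def by simp
  have r: "qsF ({0..<n},E) = shift1 (\<lambda>m. \<Sum>v\<in>{0..<n}. qsF ({0..<n}-{v},E) m)"
    by (rule rec_main) (use n in \<open>auto intro!: maxuniq_lin simp: Edef\<close>)
  have d: "qsF ({0..<n}-{v},E) = qsF ({0..<n-1},Ep)" if v: "v < n" for v
  proof -
    define \<sigma> where "\<sigma> = (\<lambda>x. if x + v + 1 < n then x + v + 1 else x + v + 1 - n)"
    define \<tau> where "\<tau> = (\<lambda>y. if v < y then y - v - 1 else y + n - v - 1)"
    have "qsF ({0..<n-1},Ep) = qsF ({0..<n}-{v},E)"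
    proof (rule iso_qsF[where \<sigma>=\<sigma> and \<tau>=\<tau>])
      show "\<forall>u\<in>{0..<n - 1}. \<sigma> u \<in> {0..<n} - {v} \<and> \<tau> (\<sigma> u) = u"
      proof
        fix u assume "u \<in> {0..<n - 1}"
        hence "u < n - 1" by simp
        from c1[OF v this] show "\<sigma> u \<in> {0..<n} - {v} \<and> \<tau> (\<sigma> u) = u"
          unfolding \<sigma>_def \<tau>_def by simp
      qed
      show "\<forall>x\<in>{0..<n} - {v}. \<tau> x \<in> {0..<n - 1} \<and> \<sigma> (\<tau> x) = x"
      proof
        fix y assume "y \<in> {0..<n} - {v}"
        hence "y < n" "y \<noteq> v" by auto
        from c2[OF v this] show "\<tau> y \<in> {0..<n - 1} \<and> \<sigma> (\<tau> y) = y"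
          unfolding \<sigma>_def \<tau>_def by simp
      qed
      show "\<forall>u\<in>{0..<n - 1}. \<forall>w\<in>{0..<n - 1}. E (\<sigma> u) (\<sigma> w) = Ep u w"
      proof (intro ballI)
        fix u w assume "u \<in> {0..<n - 1}" "w \<in> {0..<n - 1}"
        hence "u < n - 1" "w < n - 1" by auto
        from c3[OF v this n] show "E (\<sigma> u) (\<sigma> w) = Ep u w"
          unfolding Edef \<sigma>_def Ep_def by simp
      qed
    qed
    thus ?thesis by simp
  qed
  have "(\<lambda>m. \<Sum>v\<in>{0..<n}. qsF ({0..<n}-{v},E) m) = (\<lambda>m. int n * qsF ({0..<n-1},Ep) m)"
    using d by simp
  moreover have "cycle_graph n = ({0..<n},E)" unfolding E_def cycle_graph_def by simp
  ultimately show ?thesis using r unfolding path_graph_def Ep_def by (simp add: shift1_scale)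
qed



lemma L_rec:
  assumes n: "1 \<le> n"
  shows "qsF (path_graph n) =
            shift1 (\<lambda>m. \<Sum>k=1..n. qmul (qsF (path_graph (k - 1))) (qsF (path_graph (n - k))) m)"
proof -
  define E where "E = (\<lambda>u v::nat. u + 1 = v \<or> v + 1 = u)"
  have r: "qsF ({0..<n},E) = shift1 (\<lambda>m. \<Sum>v\<in>{0..<n}. qsF ({0..<n}-{v},E) m)"
    by (rule rec_main) (use n in \<open>auto intro!: maxuniq_lin simp: E_def\<close>)
  have d: "qsF ({0..<n}-{v},E) m = qmul (qsF ({0..<v},E)) (qsF ({0..<n - Suc v},E)) m"
    if v: "v < n" for v m
  proof -
    have "{0..<n}-{v} = {0..<v} \<union> {Suc v..<n}" using v by auto
    hence "qsF ({0..<n}-{v},E) m = qmul (qsF ({0..<v},E)) (qsF ({Suc v..<n},E)) m"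
      by (simp add: union_qsF E_def)
    also have "qsF ({Suc v..<n},E) = qsF ({0..<n - Suc v},E)"
      unfolding E_def by (rule path_shift)
    finally show ?thesis .
  qed
  have "(\<lambda>m. \<Sum>v\<in>{0..<n}. qsF ({0..<n}-{v},E) m) =
        (\<lambda>m. \<Sum>k=1..n. qmul (qsF (path_graph (k - 1))) (qsF (path_graph (n - k))) m)"
  proof (rule ext)
    fix m
    have "(\<Sum>k=1..n. qmul (qsF (path_graph (k - 1))) (qsF (path_graph (n - k))) m)
        = (\<Sum>k<n. qmul (qsF (path_graph k)) (qsF (path_graph (n - Suc k))) m)"
      by (simp only: One_nat_def sum.atLeast1_atMost_eq) simp
    also have "\<dots> = (\<Sum>v\<in>{0..<n}. qsF ({0..<n}-{v},E) m)"
      using d unfolding path_graph_def E_def by (simp add: atLeast0LessThan)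
    finally show "(\<Sum>v\<in>{0..<n}. qsF ({0..<n}-{v},E) m) =
        (\<Sum>k=1..n. qmul (qsF (path_graph (k - 1))) (qsF (path_graph (n - k))) m)" by simp
  qed
  thus ?thesis using r unfolding path_graph_def E_def by simp
qed

lemma S_rec:
  assumes n: "2 \<le> n"
  shows "qsF (star_graph n) =
            shift1 (\<lambda>m. int (n - 1) * qsF (star_graph (n - 1)) m + qpow (qM [1]) (n - 1) m)"
proof -
  define E where "E = (\<lambda>u v::nat. u \<noteq> v \<and> (u = 0 \<or> v = 0))"
  have r: "qsF ({0..<n},E) = shift1 (\<lambda>m. \<Sum>v\<in>{0..<n}. qsF ({0..<n}-{v},E) m)"
    by (rule rec_main) (use n maxuniq_star in \<open>auto simp: E_def\<close>)
  have d: "qsF ({0..<n}-{v},E) = qsF ({0..<n-1},E)" if "v < n" "1 \<le> v" for v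
    by (rule skip_qsF) (use that in \<open>auto simp: E_def\<close>)
  have d0: "qsF ({0..<n}-{0},E) = qpow (qM [1]) (n - 1)"
  proof -
    have "{0..<n}-{0} = {1..<n}" by auto
    moreover have "qsF ({1..<n},E) = qpow (qM [1]) (card {1..<n})"
      by (rule edgeless_qsF) (auto simp: E_def)
    ultimately show ?thesis by simp
  qed
  have "(\<lambda>m. \<Sum>v\<in>{0..<n}. qsF ({0..<n}-{v},E) m) =
        (\<lambda>m. int (n - 1) * qsF ({0..<n-1},E) m + qpow (qM [1]) (n - 1) m)"
  proof (rule ext)
    fix m
    have "{0..<n} = insert 0 {1..<n}" using n by auto
    hence "(\<Sum>v\<in>{0..<n}. qsF ({0..<n}-{v},E) m) = qsF ({0..<n}-{0},E) m + (\<Sum>v\<in>{1..<n}. qsF ({0..<n}-{v},E) m)"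
      by simp
    also have "(\<Sum>v\<in>{1..<n}. qsF ({0..<n}-{v},E) m) = (\<Sum>v\<in>{1..<n}. qsF ({0..<n-1},E) m)"
      by (rule sum.cong) (use d in auto)
    also have "\<dots> = int (n - 1) * qsF ({0..<n-1},E) m" by simp
    finally show "(\<Sum>v\<in>{0..<n}. qsF ({0..<n}-{v},E) m) = int (n - 1) * qsF ({0..<n-1},E) m + qpow (qM [1]) (n - 1) m"
      using d0 by simp
  qed
  thus ?thesis using r unfolding star_graph_def E_def by simp
qed

theorem mainTheorem16:
  shows "(\<forall>n\<ge>1. qsF (complete_graph n) =
            (\<lambda>m. int n * shift1 (qsF (complete_graph (n - 1))) m))
       \<and> (\<forall>n\<ge>1. qsF (path_graph n) =
            shift1 (\<lambda>m. \<Sum>k=1..n. qmul (qsF (path_graph (k - 1))) (qsF (path_graph (n - k))) m))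
       \<and> (\<forall>n\<ge>3. qsF (cycle_graph n) =
            (\<lambda>m. int n * shift1 (qsF (path_graph (n - 1))) m))
       \<and> (\<forall>n\<ge>2. qsF (star_graph n) =
            shift1 (\<lambda>m. int (n - 1) * qsF (star_graph (n - 1)) m + qpow (qM [1]) (n - 1) m))"
  using K_rec L_rec C_rec S_rec by blast


end
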